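(* (i) Let $n\ge1$, $q>0$, and let $f,g:\mathbb{R}\to\mathbb{R}$ be continuous nondecreasing with $f$ positive. If $\varphi\in C^2([0,R))$ is a solution of $$\varphi''+\frac{n-1}{r}\varphi'=f(\varphi)+g(\varphi)|\varphi'|^q,\qquad\varphi(0)=a,\qquad\varphi'(0)=0,$$ then $\Phi(x)=\varphi(|x|)$ belongs to $C^2(B_R)$ and is a classical solution of $\mathcal{M}^+_{0,1}(D^2\Phi)=f(\Phi)+g(\Phi)|D\Phi|^q$ in the ball $B_R\subset\mathbb{R}^n$ centered at the origin. (ii) Let $1\le k\le n$, $q>0$, and let $f,g:\mathbb{R}\to\mathbb{R}$ be continuous nondecreasing with $f$ positive and $g$ nonnegative. If $\varphi\in C^2([0,R))$ is a solution of $$\varphi''+\frac{k-1}{r}\varphi'=f(\varphi)+g(\varphi)|\varphi'|^q,\qquad\varphi(0)=a,\qquad\varphi'(0)=0,$$ then $\Phi(x)=\varphi(|x|)$ belongs to $C^2(B_R)$ and is a classical solution of $\mathcal{P}^+_k(D^2\Phi)=f(\Phi)+g(\Phi)|D\Phi|^q$ in $B_R$.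
   Context: A solution on $[0,R)$ of the Cauchy problem is a function $\varphi$ satisfying the ODE on $(0,R)$, $\varphi(0)=a$, $\lim_{r\to0^+}\varphi'(r)=0=\varphi'(0)$, with $\lim_{r\to0^+}\varphi''(r)$ existing in $\mathbb{R}$. For a real symmetric $n\times n$ matrix $X$ with ordered eigenvalues $\mu_1(X)\le\dots\le\mu_n(X)$: $\mathcal{M}^+_{0,1}(X)=\sum_{\mu_i(X)>0}\mu_i(X)$ and $\mathcal{P}^+_k(X)=\mu_{n-k+1}(X)+\dots+\mu_n(X)$. *)

theory Defs
  imports "HOL-Analysis.Analysis" "HOL-Computational_Algebra.Polynomial" "HOL-Library.Multiset"
begin

definition charpoly :: "real^'n^'n \<Rightarrow> real poly" where
  "charpoly X = det (\<chi> i j. (if i = j then [:0, 1:] else 0) - [: X $ i $ j :])"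

text \<open>Eigenvalues (with multiplicity) listed in nondecreasing order
  mu_1 <= ... <= mu_n (for a real symmetric matrix all n of them are real).\<close>
definition ordered_eigenvalues :: "real^'n^'n \<Rightarrow> real list" where
  "ordered_eigenvalues X = sorted_list_of_multiset (proots (charpoly X))"

definition pucci_M01_plus :: "real^'n^'n \<Rightarrow> real" where
  "pucci_M01_plus X = sum_list (filter (\<lambda>\<mu>. \<mu> > 0) (ordered_eigenvalues X))"

definition pucci_P_plus :: "nat \<Rightarrow> real^'n^'n \<Rightarrow> real" where
  "pucci_P_plus k X = sum_list (drop (CARD('n) - k) (ordered_eigenvalues X))"

definition C2_on_interval :: "real \<Rightarrow> (real \<Rightarrow> real) \<Rightarrow> (real \<Rightarrow> real) \<Rightarrow> (real \<Rightarrow> real) \<Rightarrow> bool" where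
  "C2_on_interval R \<phi> \<phi>1 \<phi>2 \<longleftrightarrow>
     (\<forall>r\<in>{0..<R}. (\<phi> has_real_derivative \<phi>1 r) (at r within {0..<R})) \<and>
     (\<forall>r\<in>{0..<R}. (\<phi>1 has_real_derivative \<phi>2 r) (at r within {0..<R})) \<and>
     continuous_on {0..<R} \<phi>2"

text \<open>phi (with derivatives phi1, phi2) is a solution on [0,R) of the Cauchy problem
  phi'' + (m-1)/r phi' = f(phi) + g(phi) |phi'|^q, phi(0) = a, phi'(0) = 0.
  The limit conditions at 0 of the context follow from C^2 on [0,R).\<close>
definition radial_cauchy_solution ::
  "real \<Rightarrow> (real \<Rightarrow> real) \<Rightarrow> (real \<Rightarrow> real) \<Rightarrow> real \<Rightarrow> real \<Rightarrow> real
    \<Rightarrow> (real \<Rightarrow> real) \<Rightarrow> (real \<Rightarrow> real) \<Rightarrow> (real \<Rightarrow> real) \<Rightarrow> bool" where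
  "radial_cauchy_solution m f g q a R \<phi> \<phi>1 \<phi>2 \<longleftrightarrow>
     \<phi> 0 = a \<and> \<phi>1 0 = 0 \<and>
     (\<forall>r\<in>{0<..<R}. \<phi>2 r + (m - 1) / r * \<phi>1 r = f (\<phi> r) + g (\<phi> r) * \<bar>\<phi>1 r\<bar> powr q)"

definition C2_on :: "(real^('n::finite)) set \<Rightarrow> (real^'n \<Rightarrow> real) \<Rightarrow> (real^'n \<Rightarrow> real^'n)
    \<Rightarrow> (real^'n \<Rightarrow> real^'n^'n) \<Rightarrow> bool" where
  "C2_on S u Du Hu \<longleftrightarrow>
     (\<forall>x\<in>S. (u has_derivative (\<lambda>h. Du x \<bullet> h)) (at x)) \<and>
     (\<forall>x\<in>S. (Du has_derivative (\<lambda>h. Hu x *v h)) (at x)) \<and>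
     continuous_on S Hu"

end

theory Submission
  imports Defs
begin



definition outer :: "real^'n \<Rightarrow> real^'n^'n" where
  "outer x = (\<chi> i j. x$i * x$j)"

lemma outer_conj: "B ** outer x ** transpose B = outer (B *v x)"
  by (simp add: outer_def matrix_matrix_mult_def matrix_vector_mult_def transpose_def
      vec_eq_iff sum_distrib_left sum_distrib_right mult_ac sum_product)

lemma mm_diff_left: "(A::real^'n^'m) ** (X - Y) = A ** X - A ** (Y::real^'k^'n)"
  by (simp add: matrix_matrix_mult_def vec_eq_iff sum_subtractf algebra_simps)
lemma mm_diff_right: "((X::real^'n^'m) - Y) ** (A::real^'k^'n) = X ** A - Y ** A"
  by (simp add: matrix_matrix_mult_def vec_eq_iff sum_subtractf algebra_simps)
lemma mm_scale_left: "(A::real^'n^'m) ** (c *\<^sub>R (X::real^'k^'n)) = c *\<^sub>R (A ** X)"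
  by (simp add: matrix_matrix_mult_def vec_eq_iff sum_distrib_left algebra_simps)
lemma mm_scale_right: "(c *\<^sub>R (X::real^'n^'m)) ** (A::real^'k^'n) = c *\<^sub>R (X ** A)"
  by (simp add: matrix_matrix_mult_def vec_eq_iff sum_distrib_left algebra_simps)
lemma mat_scale: "(mat c :: real^'n^'n) = c *\<^sub>R mat 1"
  by (simp add: mat_def vec_eq_iff)

lemma det_rank1:
  fixes x :: "real^'n"
  shows "det (mat c - \<beta> *\<^sub>R outer x) = (c - \<beta> * (x \<bullet> x)) * c ^ (CARD('n) - 1)"
proof -
  define k :: 'n where "k = undefined"
  have nx: "norm x = norm (norm x *\<^sub>R axis k (1::real))" by simp
  thm orthogonal_transformation_exists[OF nx]
  obtain f where f: "orthogonal_transformation f" "f x = norm x *\<^sub>R axis k (1::real)"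
    using orthogonal_transformation_exists[OF nx] by blast
  define B where "B = matrix f"
  have lf: "linear f" and oB: "orthogonal_matrix B"
    using f(1) unfolding B_def orthogonal_transformation_matrix by auto
  have Bx: "B *v x = norm x *\<^sub>R axis k 1"
    using f(2) lf by (simp add: B_def matrix_works)
  have BBt: "B ** transpose B = mat 1" using oB by (simp add: orthogonal_matrix_def)
  have dB: "det B * det B = 1" using det_orthogonal_matrix[OF oB] by auto
  have conj: "B ** (mat c - \<beta> *\<^sub>R outer x) ** transpose B
        = mat c - \<beta> *\<^sub>R outer (B *v x)"
  proof -
    have "B ** (mat c - \<beta> *\<^sub>R outer x) ** transpose B
      = B ** mat c ** transpose B - \<beta> *\<^sub>R (B ** outer x ** transpose B)"
      by (simp add: mm_diff_left mm_diff_right mm_scale_left mm_scale_right matrix_mul_assoc)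
    also have "B ** mat c ** transpose B = mat c"
      using BBt by (subst (1 2) mat_scale) (simp add: mm_scale_left mm_scale_right)
    finally show ?thesis by (simp add: outer_conj)
  qed
  have "det (mat c - \<beta> *\<^sub>R outer x) = det (mat c - \<beta> *\<^sub>R outer (norm x *\<^sub>R axis k 1))"
  proof -
    have "det (B ** (mat c - \<beta> *\<^sub>R outer x) ** transpose B) = det (mat c - \<beta> *\<^sub>R outer x)"
      using dB by (simp add: det_mul)
    then show ?thesis using Bx conj by simp
  qed
  also have "\<dots> = (\<Prod>i\<in>UNIV. (if i = k then c - \<beta> * (x \<bullet> x) else c))"
    by (subst det_diagonal) (auto simp: outer_def mat_def axis_def power2_norm_eq_inner[symmetric] power2_eq_square intro!: prod.cong)
  also have "\<dots> = (c - \<beta> * (x \<bullet> x)) * c ^ (CARD('n) - 1)"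
    by (subst prod.remove[of UNIV k]) (auto simp: card_Diff_singleton)
  finally show ?thesis .
qed

lemma poly_charpoly: "poly (charpoly X) t = det (mat t - X)"
  unfolding charpoly_def det_def
  by (auto simp: poly_sum poly_prod mat_def of_int_poly intro!: sum.cong prod.cong)

lemma charpoly_rank1:
  fixes x :: "real^'n"
  shows "charpoly (mat \<alpha> + \<beta> *\<^sub>R outer x) = [:-(\<alpha> + \<beta> * (x \<bullet> x)), 1:] * [:-\<alpha>, 1:] ^ (CARD('n) - 1)"
proof -
  have "poly (charpoly (mat \<alpha> + \<beta> *\<^sub>R outer x)) t = poly ([:-(\<alpha> + \<beta> * (x \<bullet> x)), 1:] * [:-\<alpha>, 1:] ^ (CARD('n) - 1)) t" for t
  proof -
    have eq: "mat t - (mat \<alpha> + \<beta> *\<^sub>R outer x) = mat (t - \<alpha>) - \<beta> *\<^sub>R outer x"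
      by (simp add: mat_def vec_eq_iff)
    have "poly (charpoly (mat \<alpha> + \<beta> *\<^sub>R outer x)) t = det (mat (t - \<alpha>) - \<beta> *\<^sub>R outer x)"
      by (simp only: poly_charpoly eq)
    then show ?thesis by (simp add: det_rank1 poly_power algebra_simps)
  qed
  then show ?thesis by (simp add: poly_eq_poly_eq_iff[symmetric] fun_eq_iff) 
qed

lemma proots_rank1:
  fixes x :: "real^'n"
  shows "proots (charpoly (mat \<alpha> + \<beta> *\<^sub>R outer x)) = add_mset (\<alpha> + \<beta> * (x \<bullet> x)) (replicate_mset (CARD('n) - 1) \<alpha>)"
proof -
  have "proots [:-(\<alpha> + \<beta> * (x \<bullet> x)), 1:] = {#\<alpha> + \<beta> * (x \<bullet> x)#}"
    using proots_linear_factor[of "-(\<alpha> + \<beta> * (x \<bullet> x))"] by simp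
  moreover have "proots [:-\<alpha>, 1:] = {#\<alpha>#}"
    using proots_linear_factor[of "-\<alpha>"] by simp
  moreover have "[:-\<alpha>, 1:] ^ (CARD('n) - 1) \<noteq> 0" by simp
  moreover have "[:-(\<alpha> + \<beta> * (x \<bullet> x)), 1:] \<noteq> 0" by simp
  ultimately show ?thesis
    unfolding charpoly_rank1 by (subst proots_mult) (simp_all only: proots_power, simp_all)
qed


lemma sum_list_filter_pos: "(\<forall>y\<in>set xs. (y::real) \<ge> 0) \<Longrightarrow> sum_list (filter (\<lambda>\<mu>. \<mu> > 0) xs) = sum_list xs"
  by (induction xs) auto

lemma M01_rank1:
  fixes x :: "real^'n"
  assumes "\<alpha> \<ge> 0" "\<alpha> + \<beta> * (x \<bullet> x) \<ge> 0"
  shows "pucci_M01_plus (mat \<alpha> + \<beta> *\<^sub>R outer x) = (\<alpha> + \<beta> * (x \<bullet> x)) + real (CARD('n) - 1) * \<alpha>"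
proof -
  let ?M = "add_mset (\<alpha> + \<beta> * (x \<bullet> x)) (replicate_mset (CARD('n) - 1) \<alpha>)"
  have "set (sorted_list_of_multiset ?M) = set_mset ?M"
    by (metis mset_sorted_list_of_multiset set_mset_mset)
  then have "\<forall>y\<in>set (sorted_list_of_multiset ?M). y \<ge> 0" using assms by auto
  then have "pucci_M01_plus (mat \<alpha> + \<beta> *\<^sub>R outer x) = sum_list (sorted_list_of_multiset ?M)"
    unfolding pucci_M01_plus_def ordered_eigenvalues_def proots_rank1
    by (rule sum_list_filter_pos)
  also have "\<dots> = sum_mset ?M" by (metis mset_sorted_list_of_multiset sum_mset_sum_list)
  finally show ?thesis by simp
qed

lemma P_rank1:
  fixes x :: "real^'n"
  assumes "\<alpha> \<le> \<alpha> + \<beta> * (x \<bullet> x)" "1 \<le> k" "k \<le> CARD('n)"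
  shows "pucci_P_plus k (mat \<alpha> + \<beta> *\<^sub>R outer x) = (\<alpha> + \<beta> * (x \<bullet> x)) + real (k - 1) * \<alpha>"
proof -
  let ?L = "replicate (CARD('n) - 1) \<alpha> @ [\<alpha> + \<beta> * (x \<bullet> x)]"
  have "mset ?L = add_mset (\<alpha> + \<beta> * (x \<bullet> x)) (replicate_mset (CARD('n) - 1) \<alpha>)"
    by simp
  moreover have "sorted ?L" using assms(1) by (auto simp: sorted_append)
  ultimately have "ordered_eigenvalues (mat \<alpha> + \<beta> *\<^sub>R outer x) = ?L"
    unfolding ordered_eigenvalues_def proots_rank1
    by (metis sorted_list_of_multiset_mset sorted_sort_id)
  moreover have "drop (CARD('n) - k) ?L = replicate (k - 1) \<alpha> @ [\<alpha> + \<beta> * (x \<bullet> x)]"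
    using assms(2,3) by (simp add: Suc_diff_le)
  ultimately show ?thesis unfolding pucci_P_plus_def by (simp add: sum_list_replicate)
qed




locale c2sol =
  fixes R :: real and \<phi> \<phi>1 \<phi>2 :: "real \<Rightarrow> real"
  assumes Rpos: "R > 0" and C2: "C2_on_interval R \<phi> \<phi>1 \<phi>2"
begin

lemma d0: "r \<in> {0..<R} \<Longrightarrow> (\<phi> has_real_derivative \<phi>1 r) (at r within {0..<R})"
  and d1: "r \<in> {0..<R} \<Longrightarrow> (\<phi>1 has_real_derivative \<phi>2 r) (at r within {0..<R})"
  and c2: "continuous_on {0..<R} \<phi>2"
  using C2 unfolding C2_on_interval_def by auto

lemma int_at: "r \<in> {0<..<R} \<Longrightarrow> at r within {0..<R} = at r"
  by (rule at_within_interior) auto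

lemma D0: "r \<in> {0<..<R} \<Longrightarrow> (\<phi> has_real_derivative \<phi>1 r) (at r)"
  using d0[of r] int_at[of r] by auto
lemma D1: "r \<in> {0<..<R} \<Longrightarrow> (\<phi>1 has_real_derivative \<phi>2 r) (at r)"
  using d1[of r] int_at[of r] by auto

lemma c0: "continuous_on {0..<R} \<phi>" by (rule DERIV_continuous_on[OF d0])
lemma c1: "continuous_on {0..<R} \<phi>1" by (rule DERIV_continuous_on[OF d1])

lemma c0s: "0 \<le> a \<Longrightarrow> b < R \<Longrightarrow> continuous_on {a..b} \<phi>"
  by (rule continuous_on_subset[OF c0]) auto
lemma c1s: "0 \<le> a \<Longrightarrow> b < R \<Longrightarrow> continuous_on {a..b} \<phi>1"
  by (rule continuous_on_subset[OF c1]) auto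
lemma c2s: "0 \<le> a \<Longrightarrow> b < R \<Longrightarrow> continuous_on {a..b} \<phi>2"
  by (rule continuous_on_subset[OF c2]) auto

lemma isC2: "r \<in> {0<..<R} \<Longrightarrow> isCont \<phi>2 r"
  using c2 by (metis at_within_interior continuous_on_eq_continuous_within int_at
      greaterThanLessThan_iff atLeastLessThan_iff less_imp_le)

lemma lim_quot: "((\<lambda>t. (\<phi>1 t - \<phi>1 0) / (t - 0)) \<longlongrightarrow> \<phi>2 0) (at 0 within {0..<R})"
  using d1[of 0] Rpos by (simp add: has_field_derivative_iff)

lemma lim0: "(\<phi> \<longlongrightarrow> \<phi> 0) (at 0 within {0..<R})"
  using c0 Rpos by (simp add: continuous_on_def)
lemma lim1: "(\<phi>1 \<longlongrightarrow> \<phi>1 0) (at 0 within {0..<R})"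
  using c1 Rpos by (simp add: continuous_on_def)
lemma lim2: "(\<phi>2 \<longlongrightarrow> \<phi>2 0) (at 0 within {0..<R})"
  using c2 Rpos by (simp add: continuous_on_def)


lemma phi2_0:
  assumes sol: "radial_cauchy_solution m f g q a R \<phi> \<phi>1 \<phi>2"
    and cf: "continuous_on UNIV f" and cg: "continuous_on UNIV g" and q: "q > 0"
  shows "m * \<phi>2 0 = f a"
proof -
  let ?F = "at (0::real) within {0<..<R}"
  have ntriv: "?F \<noteq> bot"
    using islimpt_greaterThanLessThan1[OF Rpos] trivial_limit_within by blast
  have sub: "{0<..<R} \<subseteq> {0..<R}" by auto
  have ph0: "\<phi> 0 = a" and p10: "\<phi>1 0 = 0"
    and ode: "\<And>r. r\<in>{0<..<R} \<Longrightarrow> \<phi>2 r + (m - 1) / r * \<phi>1 r = f (\<phi> r) + g (\<phi> r) * \<bar>\<phi>1 r\<bar> powr q"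
    using sol unfolding radial_cauchy_solution_def by auto
  have Lq: "((\<lambda>t. \<phi>1 t / t) \<longlongrightarrow> \<phi>2 0) ?F"
    using tendsto_within_subset[OF lim_quot sub] p10 by simp
  have L2: "(\<phi>2 \<longlongrightarrow> \<phi>2 0) ?F" using tendsto_within_subset[OF lim2 sub] .
  have L0: "(\<phi> \<longlongrightarrow> a) ?F" using tendsto_within_subset[OF lim0 sub] ph0 by simp
  have L1: "(\<phi>1 \<longlongrightarrow> 0) ?F" using tendsto_within_subset[OF lim1 sub] p10 by simp
  have LL: "((\<lambda>r. \<phi>2 r + (m - 1) * (\<phi>1 r / r)) \<longlongrightarrow> \<phi>2 0 + (m - 1) * \<phi>2 0) ?F"
    by (rule tendsto_add[OF L2 tendsto_mult[OF tendsto_const Lq]])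
  have L: "((\<lambda>r. f (\<phi> r) + g (\<phi> r) * \<bar>\<phi>1 r\<bar> powr q) \<longlongrightarrow> f a + g a * \<bar>0\<bar> powr q) ?F"
  proof -
    have "isCont f a" using cf continuous_on_eq_continuous_at open_UNIV by blast
    from isCont_tendsto_compose[OF this L0]
    have a1: "((\<lambda>r. f (\<phi> r)) \<longlongrightarrow> f a) ?F" .
    have "isCont g a" using cg continuous_on_eq_continuous_at open_UNIV by blast
    from isCont_tendsto_compose[OF this L0]
    have a2: "((\<lambda>r. g (\<phi> r)) \<longlongrightarrow> g a) ?F" .
    have a3: "((\<lambda>r. \<bar>\<phi>1 r\<bar>) \<longlongrightarrow> \<bar>0\<bar>) ?F" by (rule tendsto_rabs[OF L1])
    have a4: "((\<lambda>r. \<bar>\<phi>1 r\<bar> powr q) \<longlongrightarrow> \<bar>0\<bar> powr q) ?F"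
      by (rule tendsto_powr'[OF a3 tendsto_const]) (use q in simp)
    show ?thesis by (rule tendsto_add[OF a1 tendsto_mult[OF a2 a4]])
  qed
  have ev: "\<forall>\<^sub>F r in ?F. \<phi>2 r + (m - 1) * (\<phi>1 r / r) = f (\<phi> r) + g (\<phi> r) * \<bar>\<phi>1 r\<bar> powr q"
    unfolding eventually_at_filter using ode by (intro always_eventually) (simp add: field_simps)
  have "((\<lambda>r. f (\<phi> r) + g (\<phi> r) * \<bar>\<phi>1 r\<bar> powr q) \<longlongrightarrow> \<phi>2 0 + (m - 1) * \<phi>2 0) ?F"
    by (rule Lim_transform_eventually[OF LL ev])
  then have "\<phi>2 0 + (m - 1) * \<phi>2 0 = f a + g a * \<bar>0\<bar> powr q"
    using tendsto_unique[OF ntriv] L by blast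
  then show ?thesis using q by (simp add: algebra_simps)
qed


lemma phi1_pos:
  assumes sol: "radial_cauchy_solution m f g q a R \<phi> \<phi>1 \<phi>2"
    and cf: "continuous_on UNIV f" and cg: "continuous_on UNIV g" and q: "q > 0"
    and fpos: "\<forall>t. f t > 0" and m: "m \<ge> 1"
    and r1: "r1 \<in> {0<..<R}"
  shows "\<phi>1 r1 > 0"
proof (rule ccontr)
  assume neg: "\<not> \<phi>1 r1 > 0"
  have p10: "\<phi>1 0 = 0"
    and ode: "\<And>r. r\<in>{0<..<R} \<Longrightarrow> \<phi>2 r + (m - 1) / r * \<phi>1 r = f (\<phi> r) + g (\<phi> r) * \<bar>\<phi>1 r\<bar> powr q"
    using sol unfolding radial_cauchy_solution_def by auto
  have "m * \<phi>2 0 = f a" by (rule phi2_0[OF sol cf cg q])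
  then have p20: "\<phi>2 0 > 0" using fpos m by (metis less_le_trans not_less zero_less_one zero_less_mult_pos)
  have "\<forall>\<^sub>F t in at 0 within {0..<R}. 0 < \<phi>2 t" by (rule order_tendstoD(1)[OF lim2 p20])
  then obtain d where d: "d > 0" "\<And>t. t\<in>{0..<R} \<Longrightarrow> t \<noteq> 0 \<Longrightarrow> dist t 0 < d \<Longrightarrow> 0 < \<phi>2 t"
    unfolding eventually_at by blast
  define e where "e = min d R / 2"
  have e: "0 < e" "e < R" "e < d" using d Rpos by (auto simp: e_def)
  have pos_small: "\<phi>1 t > 0" if "0 < t" "t \<le> e" for t
  proof -
    have "\<phi>1 0 < \<phi>1 t"
    proof (rule DERIV_pos_imp_increasing_open[of 0 t \<phi>1])
      show "0 < t" by fact
      show "continuous_on {0..t} \<phi>1" using c1s that e by auto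
      fix x assume "0 < x" "x < t"
      then show "\<exists>y. DERIV \<phi>1 x :> y \<and> 0 < y"
        using D1[of x] d(2)[of x] that e by (intro exI[of _ "\<phi>2 x"]) auto
    qed
    then show ?thesis using p10 by simp
  qed
  have r1e: "e < r1" using pos_small[of r1] neg r1 e by force
  define S where "S = {z \<in> {e..r1}. \<phi>1 z = 0}"
  have "\<exists>z. e \<le> z \<and> z \<le> r1 \<and> \<phi>1 z = 0"
    using neg pos_small[of e] e r1e r1 by (intro IVT2') (auto intro!: c1s)
  then have Sne: "S \<noteq> {}" unfolding S_def by auto
  have Scl: "closed S" unfolding S_def
    using r1 e by (intro continuous_closed_preimage_constant c1s) auto
  have Sbdd: "bdd_below S" unfolding S_def by (rule bdd_belowI[of _ e]) auto
  define r0 where "r0 = Inf S"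
  have r0S: "r0 \<in> S" unfolding r0_def by (rule closed_contains_Inf[OF Sne Sbdd Scl])
  then have r0: "e \<le> r0" "r0 \<le> r1" "\<phi>1 r0 = 0" unfolding S_def by auto
  have r0e: "e < r0" using r0 pos_small[of e] e by (cases "r0 = e") auto
  have before: "\<phi>1 t > 0" if "e \<le> t" "t < r0" for t
  proof (rule ccontr)
    assume "\<not> \<phi>1 t > 0"
    then have "\<exists>z. e \<le> z \<and> z \<le> t \<and> \<phi>1 z = 0"
      using pos_small[of e] e that r0 r1 by (intro IVT2') (auto intro!: c1s)
    then obtain z where z: "e \<le> z" "z \<le> t" "\<phi>1 z = 0" by blast
    then have "z \<in> S" using that r0 unfolding S_def by auto
    then have "r0 \<le> z" unfolding r0_def by (rule cInf_lower[OF _ Sbdd])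
    then show False using z that by auto
  qed
  have r0R: "r0 \<in> {0<..<R}" using r0 r0e e r1 by auto
  have "\<phi>2 r0 \<le> 0"
  proof (rule ccontr)
    assume "\<not> \<phi>2 r0 \<le> 0"
    then obtain d' where d': "d' > 0" "\<And>h. h > 0 \<Longrightarrow> h < d' \<Longrightarrow> \<phi>1 (r0 - h) < \<phi>1 r0"
      using DERIV_pos_inc_left[OF D1[OF r0R]] by force
    define h where "h = min (d'/2) (r0 - e)"
    have "h > 0" "h < d'" "h \<le> r0 - e" using d' r0e by (auto simp: h_def)
    then show False using d'(2)[of h] before[of "r0 - h"] r0 by auto
  qed
  moreover have "\<phi>2 r0 = f (\<phi> r0)" using ode[OF r0R] r0 q by simp
  ultimately show False using fpos by (metis not_less)
qed


lemma phi2_nonneg: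
  assumes sol: "radial_cauchy_solution m f g q a R \<phi> \<phi>1 \<phi>2"
    and cf: "continuous_on UNIV f" and cg: "continuous_on UNIV g" and q: "q > 0"
    and fpos: "\<forall>t. f t > 0" and m: "m \<ge> 1" and mf: "mono f" and mg: "mono g"
    and r1: "r1 \<in> {0..<R}"
  shows "\<phi>2 r1 \<ge> 0"
proof (rule ccontr)
  assume neg: "\<not> \<phi>2 r1 \<ge> 0"
  have ode: "\<And>r. r\<in>{0<..<R} \<Longrightarrow> \<phi>2 r + (m - 1) * (\<phi>1 r / r) = f (\<phi> r) + g (\<phi> r) * \<phi>1 r powr q"
    using sol phi1_pos[OF sol cf cg q fpos m] unfolding radial_cauchy_solution_def
    by (metis abs_of_pos times_divide_eq_left times_divide_eq_right)
  have p1: "\<And>r. r\<in>{0<..<R} \<Longrightarrow> \<phi>1 r > 0" using phi1_pos[OF sol cf cg q fpos m] by blast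
  have "m * \<phi>2 0 = f a" by (rule phi2_0[OF sol cf cg q])
  then have p20: "\<phi>2 0 > 0" using fpos m by (metis less_le_trans not_less zero_less_one zero_less_mult_pos)
  define S where "S = {0..r1} \<inter> \<phi>2 -` {0..}"
  have Scl: "closed S" unfolding S_def
    using r1 by (intro continuous_closed_preimage c2s) auto
  have Sne: "S \<noteq> {}" using p20 r1 unfolding S_def by auto
  have Sbdd: "bdd_above S" unfolding S_def by (rule bdd_aboveI[of _ r1]) auto
  define r0 where "r0 = Sup S"
  have r0S: "r0 \<in> S" unfolding r0_def by (rule closed_contains_Sup[OF Sne Sbdd Scl])
  then have r0: "0 \<le> r0" "r0 \<le> r1" "\<phi>2 r0 \<ge> 0" unfolding S_def by auto
  have after: "\<phi>2 t < 0" if "r0 < t" "t \<le> r1" for t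
  proof (rule ccontr)
    assume "\<not> \<phi>2 t < 0"
    then have "t \<in> S" using that r0 unfolding S_def by auto
    then have "t \<le> r0" unfolding r0_def by (rule cSup_upper[OF _ Sbdd])
    then show False using that by auto
  qed
  have "\<exists>z. r0 \<le> z \<and> z \<le> r1 \<and> \<phi>2 z = 0"
    using neg r0 r1 by (intro IVT2') (auto intro!: c2s)
  then obtain z where z: "r0 \<le> z" "z \<le> r1" "\<phi>2 z = 0" by blast
  have r0z: "r0 = z" using after[of z] z by force
  then have p2r0: "\<phi>2 r0 = 0" using z by simp
  have r0pos: "r0 > 0" using p2r0 p20 r0 by (cases "r0 = 0") auto
  have r0r1: "r0 < r1" using p2r0 neg r0 by (cases "r0 = r1") auto
  have r0R: "r0 \<in> {0<..<R}" using r0pos r0r1 r1 by auto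
  define g0 where "g0 = g (\<phi> r0)"
  define \<Psi> where "\<Psi> s = g0 * \<phi>1 s powr q - (m - 1) * (\<phi>1 s / s)" for s
  have key: "\<phi>2 r \<ge> \<Psi> r - \<Psi> r0" if "r0 < r" "r \<le> r1" for r
  proof -
    have rR: "r \<in> {0<..<R}" using that r0R r1 by auto
    have "\<phi> r0 \<le> \<phi> r"
    proof (rule DERIV_nonneg_imp_increasing_open[of r0 r \<phi>])
      show "r0 \<le> r" using that by simp
      show "continuous_on {r0..r} \<phi>" using r0R rR by (intro c0s) auto
      fix x assume "r0 < x" "x < r"
      then have xR: "x \<in> {0<..<R}" using r0R rR by auto
      show "\<exists>y. DERIV \<phi> x :> y \<and> 0 \<le> y"
        using D0[OF xR] p1[OF xR] by (intro exI[of _ "\<phi>1 x"]) auto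
    qed
    then have fm: "f (\<phi> r0) \<le> f (\<phi> r)" and gm: "g0 \<le> g (\<phi> r)"
      using mf mg unfolding g0_def by (auto dest: monoD)
    have "0 \<le> \<phi>1 r powr q" by simp
    then have "g0 * \<phi>1 r powr q \<le> g (\<phi> r) * \<phi>1 r powr q" using gm by (simp add: mult_right_mono)
    then show ?thesis using ode[OF rR] ode[OF r0R] fm p2r0 unfolding \<Psi>_def g0_def by linarith
  qed
  have dec: "\<phi>1 r1 \<le> \<phi>1 r0"
  proof (rule DERIV_nonpos_imp_decreasing_open[of r0 r1 \<phi>1])
    show "r0 \<le> r1" using r0r1 by simp
    show "continuous_on {r0..r1} \<phi>1" using r0R r1 by (intro c1s) auto
    fix x assume "r0 < x" "x < r1"
    then have xR: "x \<in> {0<..<R}" using r0R r1 by auto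
    show "\<exists>y. DERIV \<phi>1 x :> y \<and> y \<le> 0"
      using D1[OF xR] after[of x] \<open>r0 < x\<close> \<open>x < r1\<close> by (intro exI[of _ "\<phi>2 x"]) auto
  qed
  show False
  proof (cases "m = 1")
    case True
    have "0 = f (\<phi> r0) + g0 * \<phi>1 r0 powr q" using ode[OF r0R] p2r0 True unfolding g0_def by simp
    then have "g0 * \<phi>1 r0 powr q < 0" using fpos by (metis add.commute add_less_same_cancel1 add_less_same_cancel2 less_add_same_cancel1 not_less)
    then have g0n: "g0 < 0" by (metis mult_nonneg_nonneg not_less powr_ge_zero)
    have "\<phi>1 r1 powr q \<le> \<phi>1 r0 powr q"
      using dec p1[of r1] r1 r0r1 r0pos q by (intro powr_mono2) auto
    then have "g0 * \<phi>1 r0 powr q \<le> g0 * \<phi>1 r1 powr q" using g0n by (simp add: mult_le_cancel_left)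
    then have "\<Psi> r1 - \<Psi> r0 \<ge> 0" unfolding \<Psi>_def using True by simp
    then show False using key[of r1] r0r1 neg by simp
  next
    case False
    have pd: "DERIV \<Psi> r0 :> g0 * (q * \<phi>1 r0 powr (q - of_nat 1) * \<phi>2 r0) - (m - 1) * ((\<phi>2 r0 * r0 - \<phi>1 r0 * 1) / (r0 * r0))"
      unfolding \<Psi>_def
      by (intro DERIV_diff DERIV_cmult DERIV_fun_powr DERIV_divide D1[OF r0R] p1[OF r0R] DERIV_ident) (use r0pos in auto)
    have "g0 * (q * \<phi>1 r0 powr (q - of_nat 1) * \<phi>2 r0) - (m - 1) * ((\<phi>2 r0 * r0 - \<phi>1 r0 * 1) / (r0 * r0))
       = (m - 1) * (\<phi>1 r0 / (r0 * r0))" using p2r0 by simp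
    moreover have "(m - 1) * (\<phi>1 r0 / (r0 * r0)) > 0" using False m p1[OF r0R] r0pos by simp
    ultimately obtain d where d: "d > 0" "\<And>h. h > 0 \<Longrightarrow> h < d \<Longrightarrow> \<Psi> r0 < \<Psi> (r0 + h)"
      using DERIV_pos_inc_right[OF pd] by force
    define h where "h = min (d/2) (r1 - r0)"
    have h: "h > 0" "h < d" "h \<le> r1 - r0" using d r0r1 by (auto simp: h_def)
    then have "\<phi>2 (r0 + h) > 0" using d(2)[of h] key[of "r0 + h"] by auto
    then show False using after[of "r0 + h"] h by auto
  qed
qed


lemma phi2_ge_quot:
  assumes sol: "radial_cauchy_solution (real k) f g q a R \<phi> \<phi>1 \<phi>2"
    and cf: "continuous_on UNIV f" and cg: "continuous_on UNIV g" and q: "q > 0"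
    and fpos: "\<forall>t. f t > 0" and k: "1 \<le> k" and mf: "mono f" and mg: "mono g"
    and gnn: "\<forall>t. g t \<ge> 0"
    and r: "r \<in> {0<..<R}"
  shows "\<phi>1 r / r \<le> \<phi>2 r"
proof -
  have m: "real k \<ge> 1" using k by simp
  have p1: "\<And>s. s\<in>{0<..<R} \<Longrightarrow> \<phi>1 s > 0" using phi1_pos[OF sol cf cg q fpos m] by blast
  have p2: "\<And>s. s\<in>{0..<R} \<Longrightarrow> \<phi>2 s \<ge> 0" using phi2_nonneg[OF sol cf cg q fpos m mf mg] by blast
  have p10: "\<phi>1 0 = 0" using sol unfolding radial_cauchy_solution_def by auto
  define h where "h s = f (\<phi> s) + g (\<phi> s) * \<bar>\<phi>1 s\<bar> powr q" for s
  have ode: "\<And>s. s\<in>{0<..<R} \<Longrightarrow> \<phi>2 s + (real k - 1) * (\<phi>1 s / s) = h s"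
    using sol unfolding radial_cauchy_solution_def h_def
    by (metis times_divide_eq_left times_divide_eq_right)
  have p1n: "\<phi>1 s \<ge> 0" if "s \<in> {0..<R}" for s
    using p1[of s] that p10 by (cases "s = 0") auto
  have hmono: "h s \<le> h r" if s: "0 \<le> s" "s \<le> r" for s
  proof -
    have "\<phi> s \<le> \<phi> r"
    proof (rule DERIV_nonneg_imp_increasing_open[of s r \<phi>])
      show "s \<le> r" by fact
      show "continuous_on {s..r} \<phi>" using s r by (intro c0s) auto
      fix x assume "s < x" "x < r"
      then have xR: "x \<in> {0<..<R}" using s r by auto
      show "\<exists>y. DERIV \<phi> x :> y \<and> 0 \<le> y"
        using D0[OF xR] p1[OF xR] by (intro exI[of _ "\<phi>1 x"]) auto
    qed
    moreover have "\<phi>1 s \<le> \<phi>1 r"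
    proof (rule DERIV_nonneg_imp_increasing_open[of s r \<phi>1])
      show "s \<le> r" by fact
      show "continuous_on {s..r} \<phi>1" using s r by (intro c1s) auto
      fix x assume "s < x" "x < r"
      then have xR: "x \<in> {0<..<R}" using s r by auto
      show "\<exists>y. DERIV \<phi>1 x :> y \<and> 0 \<le> y"
        using D1[OF xR] p2[of x] xR by (intro exI[of _ "\<phi>2 x"]) auto
    qed
    moreover have "\<phi>1 s \<ge> 0" "\<phi>1 r \<ge> 0" using p1n s r by auto
    ultimately have A1: "f (\<phi> s) \<le> f (\<phi> r)" and A2: "g (\<phi> s) \<le> g (\<phi> r)"
      and B: "\<bar>\<phi>1 s\<bar> powr q \<le> \<bar>\<phi>1 r\<bar> powr q"
      using mf mg q by (simp_all add: monoD powr_mono2)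
    have "g (\<phi> s) * \<bar>\<phi>1 s\<bar> powr q \<le> g (\<phi> r) * \<bar>\<phi>1 r\<bar> powr q"
      by (rule mult_mono[OF A2 B]) (use gnn in auto)
    then show ?thesis using A1 unfolding h_def by linarith
  qed
  define F where "F s = s ^ (k - 1) * \<phi>1 s - h r * s ^ k / real k" for s
  have "F r \<le> F 0"
  proof (rule DERIV_nonpos_imp_decreasing_open[of 0 r F])
    show "0 \<le> r" using r by simp
    show "continuous_on {0..r} F" unfolding F_def using r k
      by (intro continuous_intros c1s) auto
    fix x assume x: "0 < x" "x < r"
    then have xR: "x \<in> {0<..<R}" using r by auto
    have der: "DERIV F x :> (x ^ (k - 1) * \<phi>2 x + real (k - 1) * x ^ (k - 1 - Suc 0) * \<phi>1 x)
                 - h r * (real k * x ^ (k - Suc 0)) / real k"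
      unfolding F_def
      by (intro DERIV_diff DERIV_mult' DERIV_pow D1[OF xR] DERIV_cdivide DERIV_cmult)
    have eq: "real (k - 1) * x ^ (k - 1 - Suc 0) * \<phi>1 x = x ^ (k - 1) * ((real k - 1) * (\<phi>1 x / x))"
    proof (cases "k = 1")
      case True then show ?thesis by simp
    next
      case False
      define j where "j = k - 2"
      have j: "k = Suc (Suc j)" using k False unfolding j_def by simp
      show ?thesis using x unfolding j by (simp add: field_simps)
    qed
    have "(x ^ (k - 1) * \<phi>2 x + real (k - 1) * x ^ (k - 1 - Suc 0) * \<phi>1 x)
                 - h r * (real k * x ^ (k - Suc 0)) / real k
          = x ^ (k - 1) * (\<phi>2 x + (real k - 1) * (\<phi>1 x / x)) - h r * x ^ (k - 1)"
      using eq k by (simp add: algebra_simps)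
    also have "\<dots> = x ^ (k - 1) * (h x - h r)"
      by (simp only: ode[OF xR]) (simp add: algebra_simps)
    also have "\<dots> \<le> 0" using hmono[of x] x by (simp add: mult_nonneg_nonpos)
    finally show "\<exists>y. DERIV F x :> y \<and> y \<le> 0" using der by blast
  qed
  then have "r ^ (k - 1) * \<phi>1 r \<le> h r * r ^ k / real k" using p10 k unfolding F_def by (simp add: power_0_left)
  moreover have "r ^ k = r ^ (k - 1) * r"
  proof -
    have "k = Suc (k - 1)" using k by simp
    then show ?thesis by (metis power_Suc2)
  qed
  ultimately have "r ^ (k - 1) * (real k * \<phi>1 r) \<le> r ^ (k - 1) * (h r * r)"
    using k by (simp add: field_simps)
  then have "real k * \<phi>1 r \<le> h r * r" using r by (simp add: mult_le_cancel_left)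
  then have "real k * (\<phi>1 r / r) \<le> h r" using r by (simp add: field_simps)
  moreover have "(real k - 1) * (\<phi>1 r / r) = real k * (\<phi>1 r / r) - \<phi>1 r / r"
    by (simp only: left_diff_distrib mult_1_left)
  ultimately show ?thesis using ode[OF r] by linarith
qed

end




definition psi :: "(real \<Rightarrow> real) \<Rightarrow> (real \<Rightarrow> real) \<Rightarrow> real \<Rightarrow> real" where
  "psi \<phi>1 \<phi>2 r = (if r = 0 then \<phi>2 0 else \<phi>1 r / r)"
definition cc :: "(real \<Rightarrow> real) \<Rightarrow> (real \<Rightarrow> real) \<Rightarrow> real \<Rightarrow> real" where
  "cc \<phi>1 \<phi>2 r = (\<phi>2 r - psi \<phi>1 \<phi>2 r) / r^2"
definition Hm :: "(real \<Rightarrow> real) \<Rightarrow> (real \<Rightarrow> real) \<Rightarrow> real^'n \<Rightarrow> real^'n^'n" where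
  "Hm \<phi>1 \<phi>2 x = mat (psi \<phi>1 \<phi>2 (norm x)) + cc \<phi>1 \<phi>2 (norm x) *\<^sub>R outer x"

lemma rank1_mult: "(mat \<alpha> + \<beta> *\<^sub>R outer x) *v h = \<alpha> *\<^sub>R h + (\<beta> * (x \<bullet> h)) *\<^sub>R (x::real^'n)"
  by (simp add: vec_eq_iff matrix_vector_mult_def mat_def outer_def inner_vec_def
      sum.distrib sum_distrib_left algebra_simps if_distrib[of "\<lambda>u. u * _"] cong: if_cong)
     (simp add: if_distrib[of "\<lambda>u. _ * u"] cong: if_cong)

lemma Hm_comp: "Hm \<phi>1 \<phi>2 y $ i $ j = (if i = j then psi \<phi>1 \<phi>2 (norm y) else 0) + cc \<phi>1 \<phi>2 (norm y) * (y$i * y$j)"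
  by (simp add: Hm_def mat_def outer_def)

lemma filterlim_norm0: "R > 0 \<Longrightarrow> filterlim (norm :: real^'n \<Rightarrow> real) (at 0 within {0..<R}) (at 0)"
  unfolding filterlim_at
proof
  assume R: "R > 0"
  show "\<forall>\<^sub>F y in at (0::real^'n). norm y \<in> {0..<R} \<and> norm y \<noteq> 0"
    unfolding eventually_at using R by (intro exI[of _ R]) auto
  show "((norm :: real^'n \<Rightarrow> real) \<longlongrightarrow> 0) (at 0)"
    using tendsto_norm_zero[OF tendsto_ident_at[of "0::real^'n" UNIV]] by simp
qed


context c2sol
begin

lemma psi_lim: "\<phi>1 0 = 0 \<Longrightarrow> (psi \<phi>1 \<phi>2 \<longlongrightarrow> \<phi>2 0) (at 0 within {0..<R})"
  apply (rule Lim_transform_eventually[OF lim_quot])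
  unfolding eventually_at_filter by (intro always_eventually) (simp add: psi_def)

lemma psi_norm_lim: "\<phi>1 0 = 0 \<Longrightarrow> ((\<lambda>y::real^'n. psi \<phi>1 \<phi>2 (norm y)) \<longlongrightarrow> \<phi>2 0) (at 0)"
  using filterlim_compose[OF psi_lim filterlim_norm0[OF Rpos]] by blast

lemma phi2_norm_lim: "((\<lambda>y::real^'n. \<phi>2 (norm y)) \<longlongrightarrow> \<phi>2 0) (at 0)"
  using filterlim_compose[OF lim2 filterlim_norm0[OF Rpos]] by blast

lemma quot0_norm_lim: "((\<lambda>y::real^'n. (\<phi> (norm y) - \<phi> 0) / (norm y - 0)) \<longlongrightarrow> \<phi>1 0) (at 0)"
proof -
  have "((\<lambda>t. (\<phi> t - \<phi> 0) / (t - 0)) \<longlongrightarrow> \<phi>1 0) (at 0 within {0..<R})"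
    using d0[of 0] Rpos by (simp add: has_field_derivative_iff)
  from filterlim_compose[OF this filterlim_norm0[OF Rpos]] show ?thesis by blast
qed

lemma psi_deriv: "r \<in> {0<..<R} \<Longrightarrow> DERIV (psi \<phi>1 \<phi>2) r :> (\<phi>2 r * r - \<phi>1 r * 1) / (r * r)"
proof -
  assume r: "r \<in> {0<..<R}"
  have "DERIV (\<lambda>t. \<phi>1 t / t) r :> (\<phi>2 r * r - \<phi>1 r * 1) / (r * r)"
    using r by (intro DERIV_divide D1 DERIV_ident) auto
  then show ?thesis
    by (rule has_field_derivative_transform_within_open[of _ _ _ "{0<..}"]) (use r in \<open>auto simp: psi_def\<close>)
qed

lemma psi_isCont: "r \<in> {0<..<R} \<Longrightarrow> isCont (psi \<phi>1 \<phi>2) r"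
  using psi_deriv DERIV_isCont by blast

lemma cc_isCont: "r \<in> {0<..<R} \<Longrightarrow> isCont (cc \<phi>1 \<phi>2) r"
  unfolding cc_def[abs_def] using psi_isCont[of r] isC2[of r]
  by (intro continuous_intros) auto


lemma grad_deriv:
  fixes x :: "real^'n"
  assumes p10: "\<phi>1 0 = 0" and x: "norm x < R"
  shows "((\<lambda>y. \<phi> (norm y)) has_derivative (\<lambda>h. (psi \<phi>1 \<phi>2 (norm x) *\<^sub>R x) \<bullet> h)) (at x)"
proof (cases "x = 0")
  case True
  have "((\<lambda>y::real^'n. \<bar>(\<phi> (norm y) - \<phi> 0) / (norm y - 0)\<bar>) \<longlongrightarrow> \<bar>\<phi>1 0\<bar>) (at 0)"
    by (rule tendsto_rabs[OF quot0_norm_lim])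
  then have "((\<lambda>y::real^'n. norm (\<phi> (norm y) - \<phi> (norm 0) - 0) / norm (y - 0)) \<longlongrightarrow> 0) (at 0)"
    using p10 by (simp add: abs_divide)
  then have "((\<lambda>y. \<phi> (norm y)) has_derivative (\<lambda>h. 0)) (at (0::real^'n))"
    by (simp add: has_derivative_iff_norm)
  then show ?thesis using True by simp
next
  case False
  then have r: "norm x \<in> {0<..<R}" using x by auto
  have "((\<lambda>y. \<phi> (norm y)) has_derivative (\<lambda>h. \<phi>1 (norm x) * (h \<bullet> sgn x))) (at x)"
    using has_derivative_compose[OF has_derivative_norm[OF False] D0[OF r, unfolded has_field_derivative_def]]
    by simp
  moreover have "(\<lambda>h. \<phi>1 (norm x) * (h \<bullet> sgn x)) = (\<lambda>h. (psi \<phi>1 \<phi>2 (norm x) *\<^sub>R x) \<bullet> h)"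
    using False by (auto simp: psi_def sgn_div_norm inner_commute fun_eq_iff divide_inverse)
  ultimately show ?thesis by simp
qed

lemma hess_deriv:
  fixes x :: "real^'n"
  assumes p10: "\<phi>1 0 = 0" and x: "norm x < R"
  shows "((\<lambda>y. psi \<phi>1 \<phi>2 (norm y) *\<^sub>R y) has_derivative (\<lambda>h. Hm \<phi>1 \<phi>2 x *v h)) (at x)"
proof (cases "x = 0")
  case True
  have "((\<lambda>y::real^'n. \<bar>psi \<phi>1 \<phi>2 (norm y) - \<phi>2 0\<bar>) \<longlongrightarrow> \<bar>\<phi>2 0 - \<phi>2 0\<bar>) (at 0)"
    by (intro tendsto_rabs tendsto_diff psi_norm_lim[OF p10] tendsto_const)
  moreover have "norm (psi \<phi>1 \<phi>2 (norm y) *\<^sub>R y - psi \<phi>1 \<phi>2 (norm 0) *\<^sub>R 0 - Hm \<phi>1 \<phi>2 0 *v (y - 0)) / norm (y - 0)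
      = \<bar>psi \<phi>1 \<phi>2 (norm y) - \<phi>2 0\<bar>" for y :: "real^'n"
  proof (cases "y = 0")
    case True then show ?thesis by (simp add: psi_def)
  next
    case False
    have "psi \<phi>1 \<phi>2 (norm y) *\<^sub>R y - psi \<phi>1 \<phi>2 (norm 0) *\<^sub>R 0 - Hm \<phi>1 \<phi>2 0 *v (y - 0)
        = (psi \<phi>1 \<phi>2 (norm y) - \<phi>2 0) *\<^sub>R y"
    proof -
      have "Hm \<phi>1 \<phi>2 0 *v v = \<phi>2 0 *\<^sub>R v" for v :: "real^'n"
        unfolding Hm_def rank1_mult by (simp add: psi_def)
      then show ?thesis by (simp add: psi_def algebra_simps)
    qed
    then show ?thesis using False by simp
  qed
  ultimately have "((\<lambda>y::real^'n. norm (psi \<phi>1 \<phi>2 (norm y) *\<^sub>R y - psi \<phi>1 \<phi>2 (norm 0) *\<^sub>R 0 - Hm \<phi>1 \<phi>2 0 *v (y - 0)) / norm (y - 0)) \<longlongrightarrow> 0) (at 0)"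
    by simp
  moreover have "bounded_linear (\<lambda>h. Hm \<phi>1 \<phi>2 (0::real^'n) *v h)"
    using matrix_vector_mul_bounded_linear by (metis eta_contract_eq)
  ultimately show ?thesis using True by (simp add: has_derivative_iff_norm)
next
  case False
  then have r: "norm x \<in> {0<..<R}" using x by auto
  let ?d = "(\<phi>2 (norm x) * norm x - \<phi>1 (norm x) * 1) / (norm x * norm x)"
  have "((\<lambda>y. psi \<phi>1 \<phi>2 (norm y)) has_derivative (\<lambda>h. ?d * (h \<bullet> sgn x))) (at x)"
    using has_derivative_compose[OF has_derivative_norm[OF False] psi_deriv[OF r, unfolded has_field_derivative_def]]
    by simp
  from has_derivative_scaleR[OF this has_derivative_ident]
  have "((\<lambda>y. psi \<phi>1 \<phi>2 (norm y) *\<^sub>R y) has_derivative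
      (\<lambda>h. psi \<phi>1 \<phi>2 (norm x) *\<^sub>R h + (?d * (h \<bullet> sgn x)) *\<^sub>R x)) (at x)" .
  moreover have "(\<lambda>h. psi \<phi>1 \<phi>2 (norm x) *\<^sub>R h + (?d * (h \<bullet> sgn x)) *\<^sub>R x) = (\<lambda>h. Hm \<phi>1 \<phi>2 x *v h)"
  proof
    fix h
    have nx: "norm x > 0" using False by simp
    have "?d * (h \<bullet> sgn x) = cc \<phi>1 \<phi>2 (norm x) * (x \<bullet> h)"
      using nx by (simp add: cc_def psi_def sgn_div_norm inner_commute field_simps power2_eq_square)
    then show "psi \<phi>1 \<phi>2 (norm x) *\<^sub>R h + (?d * (h \<bullet> sgn x)) *\<^sub>R x = Hm \<phi>1 \<phi>2 x *v h"
      unfolding Hm_def rank1_mult by simp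
  qed
  ultimately show ?thesis by simp
qed


lemma hess_cont:
  fixes x :: "real^'n"
  assumes p10: "\<phi>1 0 = 0" and x: "norm x < R"
  shows "isCont (Hm \<phi>1 \<phi>2) x"
  unfolding continuous_at
proof (intro vec_tendstoI)
  fix i j
  show "((\<lambda>y. Hm \<phi>1 \<phi>2 y $ i $ j) \<longlongrightarrow> Hm \<phi>1 \<phi>2 x $ i $ j) (at x)"
    unfolding Hm_comp
  proof (cases "x = 0")
    case False
    then have r: "norm x \<in> {0<..<R}" using x by auto
    have cn: "isCont (norm::real^'n \<Rightarrow> real) x" by (intro continuous_intros)
    have c1: "isCont (\<lambda>y. psi \<phi>1 \<phi>2 (norm y)) x"
      by (rule isCont_o2[OF cn psi_isCont[OF r]])
    have c2: "isCont (\<lambda>y. cc \<phi>1 \<phi>2 (norm y)) x"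
      by (rule isCont_o2[OF cn cc_isCont[OF r]])
    have "isCont (\<lambda>y. (if i = j then psi \<phi>1 \<phi>2 (norm y) else 0) + cc \<phi>1 \<phi>2 (norm y) * (y $ i * y $ j)) x"
    proof (cases "i = j")
      case True
      then show ?thesis using c1 c2 by (simp only: True simp_thms if_True) (intro continuous_intros)
    next
      case False
      then show ?thesis using c1 c2 by (simp only: False if_False) (intro continuous_intros)
    qed
    then show "((\<lambda>y. (if i = j then psi \<phi>1 \<phi>2 (norm y) else 0) + cc \<phi>1 \<phi>2 (norm y) * (y $ i * y $ j)) \<longlongrightarrow>
        (if i = j then psi \<phi>1 \<phi>2 (norm x) else 0) + cc \<phi>1 \<phi>2 (norm x) * (x $ i * x $ j)) (at x)"
      by (simp add: continuous_at)
  next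
    case True
    have A: "((\<lambda>y::real^'n. if i = j then psi \<phi>1 \<phi>2 (norm y) else 0) \<longlongrightarrow> (if i = j then \<phi>2 0 else 0)) (at 0)"
      using psi_norm_lim[OF p10] by auto
    have "((\<lambda>y::real^'n. \<bar>\<phi>2 (norm y) - psi \<phi>1 \<phi>2 (norm y)\<bar>) \<longlongrightarrow> \<bar>\<phi>2 0 - \<phi>2 0\<bar>) (at 0)"
      by (intro tendsto_rabs tendsto_diff phi2_norm_lim psi_norm_lim[OF p10])
    then have lim0: "((\<lambda>y::real^'n. \<bar>\<phi>2 (norm y) - psi \<phi>1 \<phi>2 (norm y)\<bar>) \<longlongrightarrow> 0) (at 0)" by simp
    have bound: "norm (cc \<phi>1 \<phi>2 (norm y) * (y $ i * y $ j)) \<le> \<bar>\<phi>2 (norm y) - psi \<phi>1 \<phi>2 (norm y)\<bar>"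
      for y :: "real^'n"
    proof (cases "y = 0")
      case True then show ?thesis by simp
    next
      case False
      have "\<bar>y $ i * y $ j\<bar> \<le> norm y * norm y"
        unfolding abs_mult by (intro mult_mono component_le_norm_cart) auto
      then have "\<bar>cc \<phi>1 \<phi>2 (norm y)\<bar> * \<bar>y $ i * y $ j\<bar> \<le> \<bar>cc \<phi>1 \<phi>2 (norm y)\<bar> * (norm y * norm y)"
        by (intro mult_left_mono) auto
      also have "\<dots> = \<bar>\<phi>2 (norm y) - psi \<phi>1 \<phi>2 (norm y)\<bar>"
        using False by (simp add: cc_def abs_divide power2_eq_square)
      finally show ?thesis by (simp add: abs_mult)
    qed
    have B: "((\<lambda>y::real^'n. cc \<phi>1 \<phi>2 (norm y) * (y $ i * y $ j)) \<longlongrightarrow> 0) (at 0)"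
      by (rule Lim_null_comparison[OF always_eventually lim0]) (use bound in blast)
    show "((\<lambda>y. (if i = j then psi \<phi>1 \<phi>2 (norm y) else 0) + cc \<phi>1 \<phi>2 (norm y) * (y $ i * y $ j)) \<longlongrightarrow>
        (if i = j then psi \<phi>1 \<phi>2 (norm x) else 0) + cc \<phi>1 \<phi>2 (norm x) * (x $ i * x $ j)) (at x)"
    proof -
      have e: "(if i = j then psi \<phi>1 \<phi>2 (norm 0) else 0) + cc \<phi>1 \<phi>2 (norm 0) * ((0::real^'n) $ i * (0::real^'n) $ j)
          = (if i = j then \<phi>2 0 else 0) + 0" by (simp add: psi_def)
      show ?thesis unfolding True e by (rule tendsto_add[OF A B])
    qed
  qed
qed

lemma radial_C2:
  assumes p10: "\<phi>1 0 = 0"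
  shows "C2_on (ball (0::real^'n) R) (\<lambda>x. \<phi> (norm x)) (\<lambda>x. psi \<phi>1 \<phi>2 (norm x) *\<^sub>R x) (Hm \<phi>1 \<phi>2)"
  unfolding C2_on_def
proof (intro conjI ballI continuous_at_imp_continuous_on)
  fix x :: "real^'n" assume "x \<in> ball 0 R"
  then have x: "norm x < R" by simp
  show "((\<lambda>x. \<phi> (norm x)) has_derivative (\<lambda>h. (psi \<phi>1 \<phi>2 (norm x) *\<^sub>R x) \<bullet> h)) (at x)"
    by (rule grad_deriv[OF p10 x])
  show "((\<lambda>x. psi \<phi>1 \<phi>2 (norm x) *\<^sub>R x) has_derivative (\<lambda>h. Hm \<phi>1 \<phi>2 x *v h)) (at x)"
    by (rule hess_deriv[OF p10 x])
  show "isCont (Hm \<phi>1 \<phi>2) x" by (rule hess_cont[OF p10 x])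
qed

end




context c2sol begin

lemma lam_eq: "\<phi>1 0 = 0 \<Longrightarrow> psi \<phi>1 \<phi>2 (norm x) + cc \<phi>1 \<phi>2 (norm x) * (x \<bullet> x) = \<phi>2 (norm (x::real^'n))"
  by (cases "x = 0") (simp_all add: psi_def cc_def power2_norm_eq_inner[symmetric])

lemma normD: "\<phi>1 0 = 0 \<Longrightarrow> norm (psi \<phi>1 \<phi>2 (norm x) *\<^sub>R x) = \<bar>\<phi>1 (norm (x::real^'n))\<bar>"
  by (cases "x = 0") (simp_all add: psi_def abs_divide)

end

theorem lemma3p1:
  fixes f g :: "real \<Rightarrow> real" and q a R :: real
    and \<phi> \<phi>1 \<phi>2 :: "real \<Rightarrow> real"
  assumes "R > 0" and "q > 0"
    and "continuous_on UNIV f" and "mono f" and "\<forall>t. f t > 0"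
    and "continuous_on UNIV g" and "mono g"
  shows
    "(C2_on_interval R \<phi> \<phi>1 \<phi>2 \<and>
      radial_cauchy_solution (real CARD('n)) f g q a R \<phi> \<phi>1 \<phi>2 \<longrightarrow>
      (\<exists>D H. C2_on (ball (0::real^'n) R) (\<lambda>x. \<phi> (norm x)) D H \<and>
        (\<forall>x\<in>ball 0 R. pucci_M01_plus (H x) =
            f (\<phi> (norm x)) + g (\<phi> (norm x)) * norm (D x) powr q)))
   \<and>
    (\<forall>k::nat. 1 \<le> k \<and> k \<le> CARD('n) \<and> (\<forall>t. g t \<ge> 0) \<and>
      C2_on_interval R \<phi> \<phi>1 \<phi>2 \<and>
      radial_cauchy_solution (real k) f g q a R \<phi> \<phi>1 \<phi>2 \<longrightarrow>
      (\<exists>D H. C2_on (ball (0::real^'n) R) (\<lambda>x. \<phi> (norm x)) D H \<and>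
        (\<forall>x\<in>ball 0 R. pucci_P_plus k (H x) =
            f (\<phi> (norm x)) + g (\<phi> (norm x)) * norm (D x) powr q)))"
proof (intro conjI impI allI)
  assume A: "C2_on_interval R \<phi> \<phi>1 \<phi>2 \<and> radial_cauchy_solution (real CARD('n)) f g q a R \<phi> \<phi>1 \<phi>2"
  then have C2: "C2_on_interval R \<phi> \<phi>1 \<phi>2" and sol: "radial_cauchy_solution (real CARD('n)) f g q a R \<phi> \<phi>1 \<phi>2" by auto
  interpret c2sol R \<phi> \<phi>1 \<phi>2 using assms(1) C2 by unfold_locales
  have p10: "\<phi>1 0 = 0" and ph0: "\<phi> 0 = a"
    and ode: "\<And>r. r\<in>{0<..<R} \<Longrightarrow> \<phi>2 r + (real CARD('n) - 1) / r * \<phi>1 r = f (\<phi> r) + g (\<phi> r) * \<bar>\<phi>1 r\<bar> powr q"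
    using sol unfolding radial_cauchy_solution_def by auto
  have n1: "real CARD('n) \<ge> 1" by (simp add: Suc_le_eq)
  have rn: "real (CARD('n) - 1) = real CARD('n) - 1" by (simp add: Suc_le_eq of_nat_diff)
  note facts = assms(3) assms(6) assms(2) assms(5) n1
  show "\<exists>D H. C2_on (ball (0::real^'n) R) (\<lambda>x. \<phi> (norm x)) D H \<and>
        (\<forall>x\<in>ball 0 R. pucci_M01_plus (H x) =
            f (\<phi> (norm x)) + g (\<phi> (norm x)) * norm (D x) powr q)"
  proof (intro exI conjI ballI)
    show "C2_on (ball (0::real^'n) R) (\<lambda>x. \<phi> (norm x)) (\<lambda>x. psi \<phi>1 \<phi>2 (norm x) *\<^sub>R x) (Hm \<phi>1 \<phi>2)"
      by (rule radial_C2[OF p10])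
    fix x :: "real^'n" assume "x \<in> ball 0 R"
    then have x: "norm x < R" by simp
    have p2: "\<phi>2 (norm x) \<ge> 0" using phi2_nonneg[OF sol facts assms(4,7)] x by simp
    have alpha: "psi \<phi>1 \<phi>2 (norm x) \<ge> 0"
    proof (cases "x = 0")
      case True then show ?thesis using phi2_nonneg[OF sol facts assms(4,7), of 0] assms(1) by (simp add: psi_def)
    next
      case False then show ?thesis using phi1_pos[OF sol facts, of "norm x"] x by (simp add: psi_def)
    qed
    have "pucci_M01_plus (Hm \<phi>1 \<phi>2 x) = \<phi>2 (norm x) + real (CARD('n) - 1) * psi \<phi>1 \<phi>2 (norm x)"
      unfolding Hm_def using M01_rank1[of "psi \<phi>1 \<phi>2 (norm x)" "cc \<phi>1 \<phi>2 (norm x)" x] alpha p2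
      by (simp add: lam_eq[OF p10])
    also have "\<dots> = f (\<phi> (norm x)) + g (\<phi> (norm x)) * norm (psi \<phi>1 \<phi>2 (norm x) *\<^sub>R x) powr q"
    proof (cases "x = 0")
      case True
      have "real CARD('n) * \<phi>2 0 = f a" by (rule phi2_0[OF sol assms(3,6,2)])
      then show ?thesis using True p10 ph0 rn assms(2) by (simp add: psi_def algebra_simps)
    next
      case False
      then have r: "norm x \<in> {0<..<R}" using x by simp
      show ?thesis using ode[OF r] False rn unfolding normD[OF p10] by (simp add: psi_def)
    qed
    finally show "pucci_M01_plus (Hm \<phi>1 \<phi>2 x) = f (\<phi> (norm x)) + g (\<phi> (norm x)) * norm (psi \<phi>1 \<phi>2 (norm x) *\<^sub>R x) powr q" .
  qed
next
  fix k :: nat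
  assume A: "1 \<le> k \<and> k \<le> CARD('n) \<and> (\<forall>t. g t \<ge> 0) \<and> C2_on_interval R \<phi> \<phi>1 \<phi>2 \<and>
      radial_cauchy_solution (real k) f g q a R \<phi> \<phi>1 \<phi>2"
  then have C2: "C2_on_interval R \<phi> \<phi>1 \<phi>2" and sol: "radial_cauchy_solution (real k) f g q a R \<phi> \<phi>1 \<phi>2"
    and k: "1 \<le> k" "k \<le> CARD('n)" and gnn: "\<forall>t. g t \<ge> 0" by auto
  interpret c2sol R \<phi> \<phi>1 \<phi>2 using assms(1) C2 by unfold_locales
  have p10: "\<phi>1 0 = 0" and ph0: "\<phi> 0 = a"
    and ode: "\<And>r. r\<in>{0<..<R} \<Longrightarrow> \<phi>2 r + (real k - 1) / r * \<phi>1 r = f (\<phi> r) + g (\<phi> r) * \<bar>\<phi>1 r\<bar> powr q"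
    using sol unfolding radial_cauchy_solution_def by auto
  have rk: "real (k - 1) = real k - 1" using k by (simp add: of_nat_diff)
  show "\<exists>D H. C2_on (ball (0::real^'n) R) (\<lambda>x. \<phi> (norm x)) D H \<and>
        (\<forall>x\<in>ball 0 R. pucci_P_plus k (H x) =
            f (\<phi> (norm x)) + g (\<phi> (norm x)) * norm (D x) powr q)"
  proof (intro exI conjI ballI)
    show "C2_on (ball (0::real^'n) R) (\<lambda>x. \<phi> (norm x)) (\<lambda>x. psi \<phi>1 \<phi>2 (norm x) *\<^sub>R x) (Hm \<phi>1 \<phi>2)"
      by (rule radial_C2[OF p10])
    fix x :: "real^'n" assume "x \<in> ball 0 R"
    then have x: "norm x < R" by simp
    have ord: "psi \<phi>1 \<phi>2 (norm x) \<le> \<phi>2 (norm x)"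
    proof (cases "x = 0")
      case True then show ?thesis by (simp add: psi_def)
    next
      case False then show ?thesis
        using phi2_ge_quot[OF sol assms(3,6,2,5) k(1) assms(4,7) gnn, of "norm x"] x by (simp add: psi_def)
    qed
    have "pucci_P_plus k (Hm \<phi>1 \<phi>2 x) = \<phi>2 (norm x) + real (k - 1) * psi \<phi>1 \<phi>2 (norm x)"
      unfolding Hm_def using P_rank1[of "psi \<phi>1 \<phi>2 (norm x)" "cc \<phi>1 \<phi>2 (norm x)" x k] ord k
      by (simp add: lam_eq[OF p10])
    also have "\<dots> = f (\<phi> (norm x)) + g (\<phi> (norm x)) * norm (psi \<phi>1 \<phi>2 (norm x) *\<^sub>R x) powr q"
    proof (cases "x = 0")
      case True
      have "real k * \<phi>2 0 = f a" by (rule phi2_0[OF sol assms(3,6,2)])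
      then show ?thesis using True p10 ph0 rk assms(2) by (simp add: psi_def algebra_simps)
    next
      case False
      then have r: "norm x \<in> {0<..<R}" using x by simp
      show ?thesis using ode[OF r] False rk unfolding normD[OF p10] by (simp add: psi_def)
    qed
    finally show "pucci_P_plus k (Hm \<phi>1 \<phi>2 x) = f (\<phi> (norm x)) + g (\<phi> (norm x)) * norm (psi \<phi>1 \<phi>2 (norm x) *\<^sub>R x) powr q" .
  qed
qed



end
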